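(* Let $\sigma\in S_n$, $\tau\in S_{n+1}$ and $\sigma\prec\tau$. Then $\mathrm{al}(\tau)\le\mathrm{al}(\sigma)+2$ and, for every $k\in\mathbf{N}$, $s_k(\tau)\le s_k(\sigma)+2$.
   Context: $S_n$ is the set of permutations of $[n]$; $\pi\prec\rho$ means $\rho$ has a subsequence order-isomorphic to $\pi$. For a permutation $\pi$ of length $n$ and $A\subset[n]$, $\pi|A$ is the permutation order-isomorphic to the subsequence of $\pi$ at positions in $A$. A permutation $\sigma$ is alternating if $\sigma(\{1,3,5,\dots\})>\sigma(\{2,4,6,\dots\})$. $\mathrm{al}(\pi)$ is the maximum length of an alternating permutation $\rho$ with $\rho\prec\pi$ or $\rho\prec\pi^{-1}$. For $\sigma\in S_n,\tau\in S_m$, $\sigma\oplus\tau\in S_{n+m}$ equals $\sigma(i)$ at $i\le n$ and $n+\tau(i-n)$ at $i>n$; $\sigma\ominus\tau$ equals $m+\sigma(i)$ at $i\le n$ and $\tau(i-n)$ at $i>n$. Up-(down-)indecomposable means not of the form $\sigma\oplus\tau$ ($\sigma\ominus\tau$) with both nonempty; $h^+(\pi)$ ($h^-(\pi)$) is the maximum length of a block in the unique decomposition of $\pi$ as a $\oplus$-sum of up-indecomposables ($\ominus$-sum of down-indecomposables). $H_k^\pm=\{\pi:h^\pm(\pi)<k\}$. For $k\ge2$ and $\pi\in S_n$, $s_k(\pi)$ is the number $r$ of intervals in the greedy partition $I_1<\dots<I_r$ of $[n]$ where $I_1$ is the longest initial interval with $\pi|I_1\in H_k^+\cup H_k^-$,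 $I_2$ the longest following interval with $\pi|I_2\in H_k^+\cup H_k^-$, etc. By convention $s_1(\pi)=\infty$ for all $\pi$. *)

theory Defs
  imports Main "HOL-Library.Extended_Nat"
begin

text \<open>Permutations of [n] are represented as lists of length n listing pi(1),...,pi(n).\<close>

definition is_perm :: "nat \<Rightarrow> nat list \<Rightarrow> bool" where
  "is_perm n xs \<longleftrightarrow> distinct xs \<and> set xs = {1..n}"

text \<open>Standardisation: the permutation order-isomorphic to a list of distinct naturals.\<close>
definition std :: "nat list \<Rightarrow> nat list" where
  "std xs = map (\<lambda>x. card {y \<in> set xs. y \<le> x}) xs"

text \<open>restriction pi|A to a set of (0-based) positions\<close>
definition restr :: "nat list \<Rightarrow> nat set \<Rightarrow> nat list" where
  "restr xs A = std (nths xs A)"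

definition contained :: "nat list \<Rightarrow> nat list \<Rightarrow> bool" where
  "contained p r \<longleftrightarrow> (\<exists>A. A \<subseteq> {..<length r} \<and> restr r A = p)"

definition perm_inv :: "nat list \<Rightarrow> nat list" where
  "perm_inv xs = map (\<lambda>v. Suc (THE i. i < length xs \<and> xs ! i = v)) [1..<Suc (length xs)]"

text \<open>alternating: values at odd positions 1,3,5,... (0-based indices 0,2,4,...) exceed
  values at even positions 2,4,... (0-based 1,3,...)\<close>
definition alternating :: "nat list \<Rightarrow> bool" where
  "alternating xs \<longleftrightarrow>
     (\<forall>i<length xs. \<forall>j<length xs. even i \<and> odd j \<longrightarrow> xs ! i > xs ! j)"

definition al :: "nat list \<Rightarrow> nat" where
  "al p = Max {length r | r. alternating r \<and> (contained r p \<or> contained r (perm_inv p))}"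

definition oplus :: "nat list \<Rightarrow> nat list \<Rightarrow> nat list" where
  "oplus s t = s @ map (\<lambda>x. length s + x) t"

definition ominus :: "nat list \<Rightarrow> nat list \<Rightarrow> nat list" where
  "ominus s t = map (\<lambda>x. length t + x) s @ t"

definition up_indec :: "nat list \<Rightarrow> bool" where
  "up_indec p \<longleftrightarrow> \<not> (\<exists>s t. s \<noteq> [] \<and> t \<noteq> [] \<and> is_perm (length s) s \<and>
       is_perm (length t) t \<and> p = oplus s t)"

definition down_indec :: "nat list \<Rightarrow> bool" where
  "down_indec p \<longleftrightarrow> \<not> (\<exists>s t. s \<noteq> [] \<and> t \<noteq> [] \<and> is_perm (length s) s \<and>
       is_perm (length t) t \<and> p = ominus s t)"

text \<open>H_k^+ = {pi. h^+(pi) < k}: pi is the (unique) oplus-sum of up-indecomposable blocks,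
  each of length < k.  Analogously H_k^-.\<close>
definition H_plus :: "nat \<Rightarrow> nat list \<Rightarrow> bool" where
  "H_plus k p \<longleftrightarrow> (\<exists>bs. p = foldr oplus bs [] \<and>
      (\<forall>b\<in>set bs. b \<noteq> [] \<and> is_perm (length b) b \<and> up_indec b \<and> length b < k))"

definition H_minus :: "nat \<Rightarrow> nat list \<Rightarrow> bool" where
  "H_minus k p \<longleftrightarrow> (\<exists>bs. p = foldr ominus bs [] \<and>
      (\<forall>b\<in>set bs. b \<noteq> [] \<and> is_perm (length b) b \<and> down_indec b \<and> length b < k))"

text \<open>Greedy partition count: repeatedly cut off the longest initial segment whose
  standardisation satisfies P; the first argument is fuel (the length suffices when
  every singleton satisfies P, which holds for k >= 2).\<close>
fun greedy_count :: "(nat list \<Rightarrow> bool) \<Rightarrow> nat \<Rightarrow> nat list \<Rightarrow> nat" where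
  "greedy_count P 0 xs = 0"
| "greedy_count P (Suc f) xs =
     (if xs = [] then 0
      else (let m = (GREATEST j. j \<le> length xs \<and> P (std (take j xs)))
            in Suc (greedy_count P f (drop m xs))))"

definition s_k :: "nat \<Rightarrow> nat list \<Rightarrow> enat" where
  "s_k k p = (if k \<le> 1 then \<infinity>
      else enat (greedy_count (\<lambda>q. H_plus k q \<or> H_minus k q) (length p) p))"

end

theory Submission
  imports Defs "HOL-Library.Sublist"
begin

definition rank :: "nat list \<Rightarrow> nat \<Rightarrow> nat" where
  "rank xs x = card {y \<in> set xs. y \<le> x}"

lemma std_rank: "std xs = map (rank xs) xs"
  by (simp add: std_def rank_def)

lemma length_std[simp]: "length (std xs) = length xs"
  by (simp add: std_def)

lemma std_nth: "i < length xs \<Longrightarrow> std xs ! i = rank xs (xs ! i)"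
  by (simp add: std_rank)

lemma rank_less: "x \<in> set xs \<Longrightarrow> y \<in> set xs \<Longrightarrow> rank xs x < rank xs y \<longleftrightarrow> x < y"
proof
  assume x: "x \<in> set xs" and y: "y \<in> set xs"
  show "x < y \<Longrightarrow> rank xs x < rank xs y"
  proof -
    assume "x < y"
    then have "y \<in> {z \<in> set xs. z \<le> y}" "y \<notin> {z \<in> set xs. z \<le> x}" using y by auto
    then have ne: "{z \<in> set xs. z \<le> x} \<noteq> {z \<in> set xs. z \<le> y}" by metis
    have "{z \<in> set xs. z \<le> x} \<subseteq> {z \<in> set xs. z \<le> y}" using \<open>x < y\<close> by auto
    with ne have "{z \<in> set xs. z \<le> x} \<subset> {z \<in> set xs. z \<le> y}" by blast
    then show ?thesis unfolding rank_def by (intro psubset_card_mono) auto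
  qed
  show "rank xs x < rank xs y \<Longrightarrow> x < y"
  proof (rule ccontr)
    assume "rank xs x < rank xs y" "\<not> x < y"
    then have "rank xs y \<le> rank xs x" unfolding rank_def by (intro card_mono) auto
    then show False using \<open>rank xs x < rank xs y\<close> by simp
  qed
qed

lemma std_nth_less: "i < length xs \<Longrightarrow> j < length xs \<Longrightarrow> std xs ! i < std xs ! j \<longleftrightarrow> xs ! i < xs ! j"
  by (simp add: std_nth rank_less)

lemma rank_pos: assumes "x \<in> set xs" shows "rank xs x \<ge> 1"
proof -
  have "card {y \<in> set xs. y \<le> x} > 0" using assms by (subst card_gt_0_iff) auto
  then show ?thesis by (simp add: rank_def)
qed

lemma rank_le: "rank xs x \<le> length xs"
proof -
  have "card {y \<in> set xs. y \<le> x} \<le> card (set xs)" by (rule card_mono) auto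
  then show ?thesis unfolding rank_def using card_length[of xs] by linarith
qed

definition oiso :: "nat list \<Rightarrow> nat list \<Rightarrow> bool" where
  "oiso xs ys \<longleftrightarrow> length xs = length ys \<and>
     (\<forall>i<length xs. \<forall>j<length xs. xs ! i < xs ! j \<longleftrightarrow> ys ! i < ys ! j)"

lemma rank_distinct_nth:
  assumes "distinct xs" "i < length xs"
  shows "rank xs (xs ! i) = card {j. j < length xs \<and> xs ! j \<le> xs ! i}"
proof -
  have "{y \<in> set xs. y \<le> xs ! i} = (nth xs) ` {j. j < length xs \<and> xs ! j \<le> xs ! i}"
    by (auto simp: in_set_conv_nth)
  moreover have "inj_on (nth xs) {j. j < length xs \<and> xs ! j \<le> xs ! i}"
    using assms by (intro inj_on_nth) auto
  ultimately show ?thesis unfolding rank_def by (simp add: card_image)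
qed

lemma oiso_std:
  assumes "distinct xs" "distinct ys" "oiso xs ys"
  shows "std xs = std ys"
proof (rule nth_equalityI)
  show "length (std xs) = length (std ys)" using assms(3) by (simp add: oiso_def)
  fix i assume i: "i < length (std xs)"
  have e: "{j. j < length xs \<and> xs ! j \<le> xs ! i} = {j. j < length ys \<and> ys ! j \<le> ys ! i}"
    using assms(3) i by (auto simp: oiso_def not_less[symmetric])
  show "std xs ! i = std ys ! i"
    using i assms e by (simp add: std_nth rank_distinct_nth oiso_def)
qed

lemma oiso_std_self: "oiso xs (std xs)"
  by (simp add: oiso_def std_nth_less)

lemma distinct_std: "distinct xs \<Longrightarrow> distinct (std xs)"
  by (auto simp: distinct_conv_nth std_nth_less nat_neq_iff)

lemma std_std: "distinct xs \<Longrightarrow> std (std xs) = std xs"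
  using oiso_std[of "std xs" xs] oiso_std_self[of xs] distinct_std[of xs]
  by (simp add: oiso_def)

lemma std_map_mono:
  assumes "\<And>a b. a \<in> set xs \<Longrightarrow> b \<in> set xs \<Longrightarrow> a < b \<Longrightarrow> f a < f b" "distinct xs"
  shows "std (map f xs) = std xs"
proof -
  have inj: "inj_on f (set xs)"
    by (rule inj_onI) (metis assms(1) less_irrefl nat_neq_iff)
  have d: "distinct (map f xs)" using assms inj by (simp add: distinct_map)
  have "f a < f b \<longleftrightarrow> a < b" if "a \<in> set xs" "b \<in> set xs" for a b
    using assms(1)[OF that] assms(1)[OF that(2,1)] by (metis less_asym nat_neq_iff)
  then have "oiso (map f xs) xs" unfolding oiso_def by simp
  with d assms(2) show ?thesis by (rule oiso_std)
qed

lemma std_map_rank: "distinct ys \<Longrightarrow> set zs \<subseteq> set ys \<Longrightarrow> distinct zs \<Longrightarrow> std (map (rank ys) zs) = std zs"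
  by (rule std_map_mono) (auto simp: rank_less subset_iff)

lemma perm_std_self:
  assumes "is_perm n p" shows "std p = p"
proof -
  have "rank p v = v" if "v \<in> set p" for v
  proof -
    have "{y \<in> set p. y \<le> v} = {1..v}" using assms that by (auto simp: is_perm_def)
    then show ?thesis by (simp add: rank_def)
  qed
  then show ?thesis by (simp add: std_rank map_idI)
qed

lemma is_perm_std: assumes "distinct xs" shows "is_perm (length xs) (std xs)"
proof -
  have d: "distinct (std xs)" using assms by (rule distinct_std)
  have sub: "set (std xs) \<subseteq> {1..length xs}"
    using rank_pos[of _ xs] by (auto simp: std_rank rank_le)
  have "card (set (std xs)) = length xs" using d by (simp add: distinct_card)
  then have "set (std xs) = {1..length xs}" using sub
    by (intro card_subset_eq) auto
  with d show ?thesis by (simp add: is_perm_def)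
qed

lemma is_perm_length: "is_perm n p \<Longrightarrow> length p = n"
  unfolding is_perm_def by (metis card_atLeastAtMost diff_Suc_1 distinct_card)

lemma nths_restrict: "nths xs N = nths xs (N \<inter> {..<length xs})"
  unfolding nths_def
  by (rule arg_cong[where f="map fst"], rule filter_cong) (auto simp: set_zip)

lemma contained_iff: "contained p r \<longleftrightarrow> (\<exists>zs. subseq zs r \<and> std zs = p)"
  unfolding contained_def restr_def
proof safe
  fix A assume "A \<subseteq> {..<length r}" "p = std (nths r A)"
  then show "\<exists>zs. subseq zs r \<and> std zs = std (nths r A)"
  proof (intro exI conjI)
    show "subseq (nths r A) r" using subseq_conv_nths by blast
  qed (rule refl)
next
  fix zs assume "subseq zs r" "p = std zs"
  then obtain N where "zs = nths r N" by (auto simp: subseq_conv_nths)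
  then have "std (nths r (N \<inter> {..<length r})) = std zs" by (simp flip: nths_restrict)
  then show "\<exists>A\<subseteq>{..<length r}. std (nths r A) = std zs"
    by (intro exI[of _ "N \<inter> {..<length r}"]) auto
qed

lemma contained_std:
  assumes "distinct ys" "subseq zs ys"
  shows "contained (std zs) (std ys)"
proof -
  have "subseq (map (rank ys) zs) (std ys)" using assms by (simp add: std_rank subseq_map)
  moreover have "std (map (rank ys) zs) = std zs"
    using assms by (intro std_map_rank) (auto simp: subseq_conv_nths dest: in_set_nthsD)
  ultimately show ?thesis by (auto simp: contained_iff)
qed


lemma subseq_fun:
  assumes "subseq zs p"
  shows "\<exists>f. (\<forall>i<length zs. f i < length p \<and> zs ! i = p ! f i) \<and> (\<forall>i j. i < j \<longrightarrow> j < length zs \<longrightarrow> f i < f j)"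
  using assms
proof (induction rule: list_emb.induct)
  case list_emb_Nil
  then show ?case by auto
next
  case (list_emb_Cons xs ys y)
  then obtain f where f: "\<forall>i<length xs. f i < length ys \<and> xs ! i = ys ! f i"
    "\<forall>i j. i < j \<longrightarrow> j < length xs \<longrightarrow> f i < f j" by blast
  show ?case by (rule exI[of _ "\<lambda>i. Suc (f i)"]) (use f in auto)
next
  case (list_emb_Cons2 x y xs ys)
  then obtain f where f: "\<forall>i<length xs. f i < length ys \<and> xs ! i = ys ! f i"
    "\<forall>i j. i < j \<longrightarrow> j < length xs \<longrightarrow> f i < f j" by blast
  define g where "g = (\<lambda>i. case i of 0 \<Rightarrow> 0 | Suc k \<Rightarrow> Suc (f k))"
  have 1: "\<forall>i<length (x # xs). g i < length (y # ys) \<and> (x # xs) ! i = (y # ys) ! g i"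
  proof (intro allI impI)
    fix i assume "i < length (x # xs)"
    then show "g i < length (y # ys) \<and> (x # xs) ! i = (y # ys) ! g i"
      using f list_emb_Cons2.hyps(1) by (cases i) (auto simp: g_def)
  qed
  have 2: "\<forall>i j. i < j \<longrightarrow> j < length (x # xs) \<longrightarrow> g i < g j"
  proof (intro allI impI)
    fix i j :: nat assume "i < j" "j < length (x # xs)"
    then show "g i < g j"
      using f by (cases i; cases j) (auto simp: g_def)
  qed
  show ?case using 1 2 by blast
qed

lemma fun_subseq:
  assumes "\<forall>i<length zs. f i < length p \<and> zs ! i = p ! f i"
    "\<forall>i j. i < j \<longrightarrow> j < length zs \<longrightarrow> f i < f j"
  shows "subseq zs p"
  using assms
proof (induction p arbitrary: zs f)
  case Nil
  then show ?case by (cases zs) auto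
next
  case (Cons y ys)
  show ?case
  proof (cases zs)
    case Nil
    then show ?thesis by simp
  next
    case (Cons z zs')
    show ?thesis
    proof (cases "f 0 = 0")
      case True
      have pos: "f (Suc i) > 0" if "i < length zs'" for i
        using Cons.prems(2) that \<open>zs = z # zs'\<close> True by (metis Suc_less_eq length_Cons zero_less_Suc)
      have "subseq zs' ys"
      proof (rule Cons.IH[of zs' "\<lambda>i. f (Suc i) - 1"])
        show "\<forall>i<length zs'. f (Suc i) - 1 < length ys \<and> zs' ! i = ys ! (f (Suc i) - 1)"
        proof (intro allI impI)
          fix i assume i: "i < length zs'"
          have "f (Suc i) < length (y # ys) \<and> zs ! Suc i = (y # ys) ! f (Suc i)"
            using Cons.prems(1) i \<open>zs = z # zs'\<close> by auto
          then show "f (Suc i) - 1 < length ys \<and> zs' ! i = ys ! (f (Suc i) - 1)"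
            using pos[OF i] \<open>zs = z # zs'\<close> by (cases "f (Suc i)") auto
        qed
        show "\<forall>i j. i < j \<longrightarrow> j < length zs' \<longrightarrow> f (Suc i) - 1 < f (Suc j) - 1"
          using Cons.prems(2) pos \<open>zs = z # zs'\<close>
          by (metis Suc_less_eq diff_less_mono length_Cons less_imp_le_nat less_one not_less order.strict_trans)
      qed
      moreover have "z = y" using Cons.prems(1) \<open>zs = z # zs'\<close> True by auto
      ultimately show ?thesis using \<open>zs = z # zs'\<close> by simp
    next
      case False
      have pos: "f i > 0" if "i < length zs" for i
        using Cons.prems(2) that False by (metis gr0I less_nat_zero_code neq0_conv)
      have "subseq zs ys"
      proof (rule Cons.IH[of zs "\<lambda>i. f i - 1"])
        show "\<forall>i<length zs. f i - 1 < length ys \<and> zs ! i = ys ! (f i - 1)"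
        proof (intro allI impI)
          fix i assume i: "i < length zs"
          then show "f i - 1 < length ys \<and> zs ! i = ys ! (f i - 1)"
            using Cons.prems(1) pos[OF i] by (cases "f i") auto
        qed
        show "\<forall>i j. i < j \<longrightarrow> j < length zs \<longrightarrow> f i - 1 < f j - 1"
        proof (intro allI impI)
          fix i j :: nat assume ij: "i < j" "j < length zs"
          then have "f i < f j" "f i > 0" using Cons.prems(2) pos by auto
          then show "f i - 1 < f j - 1" by linarith
        qed
      qed
      then show ?thesis by (rule list_emb_Cons)
    qed
  qed
qed

lemma contained_emb:
  assumes r: "is_perm m r" and p: "distinct p"
  shows "contained r p \<longleftrightarrow> (\<exists>f. (\<forall>i<m. f i < length p) \<and> (\<forall>i j. i < j \<longrightarrow> j < m \<longrightarrow> f i < f j) \<and>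
           (\<forall>i<m. \<forall>j<m. r ! i < r ! j \<longleftrightarrow> p ! f i < p ! f j))"
proof
  have lr: "length r = m" using r by (rule is_perm_length)
  assume "contained r p"
  then obtain zs where zs: "subseq zs p" "std zs = r" unfolding contained_iff by blast
  from zs(2) have "length (std zs) = length r" by simp
  then have lz: "length zs = m" using lr by simp
  from subseq_fun[OF zs(1)] obtain f where ff: "(\<forall>i<length zs. f i < length p \<and> zs ! i = p ! f i) \<and>
    (\<forall>i j. i < j \<longrightarrow> j < length zs \<longrightarrow> f i < f j)" ..
  note f = ff[THEN conjunct1] ff[THEN conjunct2]
  show "\<exists>f. (\<forall>i<m. f i < length p) \<and> (\<forall>i j. i < j \<longrightarrow> j < m \<longrightarrow> f i < f j) \<and>
           (\<forall>i<m. \<forall>j<m. r ! i < r ! j \<longleftrightarrow> p ! f i < p ! f j)"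
  proof (rule exI[of _ f], intro conjI allI impI)
    fix i j assume i: "i < m" and j: "j < m"
    show "r ! i < r ! j \<longleftrightarrow> p ! f i < p ! f j"
      using std_nth_less[of i zs j] f(1) i j lz zs(2) by auto
  qed (use f lz in auto)
next
  have lr: "length r = m" using r by (rule is_perm_length)
  assume "\<exists>f. (\<forall>i<m. f i < length p) \<and> (\<forall>i j. i < j \<longrightarrow> j < m \<longrightarrow> f i < f j) \<and>
           (\<forall>i<m. \<forall>j<m. r ! i < r ! j \<longleftrightarrow> p ! f i < p ! f j)"
  then obtain f where f: "\<forall>i<m. f i < length p" "\<forall>i j. i < j \<longrightarrow> j < m \<longrightarrow> f i < f j"
    "\<forall>i<m. \<forall>j<m. r ! i < r ! j \<longleftrightarrow> p ! f i < p ! f j" by blast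
  define zs where "zs = map (\<lambda>i. p ! f i) [0..<m]"
  have lz: "length zs = m" by (simp add: zs_def)
  have sub: "subseq zs p" by (rule fun_subseq[of zs f]) (use f in \<open>auto simp: zs_def\<close>)
  have dz: "distinct zs"
    unfolding zs_def distinct_conv_nth using f(1,2) p
    by (auto simp: nth_eq_iff_index_eq) (metis nat_neq_iff less_irrefl)
  have dr: "distinct r" using r by (simp add: is_perm_def)
  have "oiso zs r" using f(3) lz lr by (auto simp: oiso_def zs_def)
  then have "std zs = std r" using dz dr by (intro oiso_std)
  then have "std zs = r" using perm_std_self[OF r] by simp
  with sub show "contained r p" unfolding contained_iff by blast
qed

lemma length_perm_inv[simp]: "length (perm_inv xs) = length xs"
  by (auto simp: perm_inv_def not_less_eq_eq)

lemma perm_inv_nth: "a < length xs \<Longrightarrow> perm_inv xs ! a = Suc (THE i. i < length xs \<and> xs ! i = Suc a)"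
  by (simp add: perm_inv_def del: upt_Suc)

lemma perm_unique_index:
  assumes "is_perm m r" "v \<in> {1..m}"
  shows "\<exists>!i. i < m \<and> r ! i = v"
proof -
  have l: "length r = m" using assms(1) by (rule is_perm_length)
  have d: "distinct r" using assms(1) by (simp add: is_perm_def)
  have "v \<in> set r" using assms by (simp add: is_perm_def)
  then obtain i where "i < m" "r ! i = v" using l by (auto simp: in_set_conv_nth)
  then show ?thesis using d l by (metis nth_eq_iff_index_eq)
qed

lemma perm_val: "is_perm m r \<Longrightarrow> i < m \<Longrightarrow> r ! i \<in> {1..m}"
  by (metis is_perm_def is_perm_length nth_mem)

lemma perm_inv_at:
  assumes "is_perm m r" "i < m"
  shows "perm_inv r ! (r ! i - 1) = Suc i"
proof -
  have l: "length r = m" using assms(1) by (rule is_perm_length)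
  have v: "r ! i \<in> {1..m}" using perm_val assms by blast
  then have a: "r ! i - 1 < m" "Suc (r ! i - 1) = r ! i" by auto
  have "(THE j. j < m \<and> r ! j = r ! i) = i"
    using perm_unique_index[OF assms(1) v] assms(2) by (auto intro: the1_equality)
  then show ?thesis using a l by (simp add: perm_inv_nth)
qed

lemma perm_inv_at2:
  assumes "is_perm m r" "a < m"
  shows "perm_inv r ! a - 1 < m \<and> r ! (perm_inv r ! a - 1) = Suc a \<and> perm_inv r ! a \<ge> 1"
proof -
  have l: "length r = m" using assms(1) by (rule is_perm_length)
  have "Suc a \<in> {1..m}" using assms by auto
  from theI'[OF perm_unique_index[OF assms(1) this]]
  show ?thesis using l assms by (simp add: perm_inv_nth)
qed

lemma is_perm_inv:
  assumes "is_perm m r" shows "is_perm m (perm_inv r)"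
proof -
  have l: "length r = m" using assms(1) by (rule is_perm_length)
  have d: "distinct (perm_inv r)"
    unfolding distinct_conv_nth using perm_inv_at2[OF assms] l
    by (metis Suc_inject length_perm_inv)
  have sub: "set (perm_inv r) \<subseteq> {1..m}"
  proof
    fix v assume "v \<in> set (perm_inv r)"
    then obtain a where "a < m" "v = perm_inv r ! a" using l by (auto simp: in_set_conv_nth)
    then show "v \<in> {1..m}" using perm_inv_at2[OF assms, of a] by auto
  qed
  have "card (set (perm_inv r)) = m" using d l by (simp add: distinct_card)
  then have "set (perm_inv r) = {1..m}" using sub by (intro card_subset_eq) auto
  with d show ?thesis by (simp add: is_perm_def)
qed

lemma contained_inv:
  assumes r: "is_perm m r" and p: "is_perm N p" and c: "contained r p"
  shows "contained (perm_inv r) (perm_inv p)"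
proof -
  have lp: "length p = N" using p by (rule is_perm_length)
  have dp: "distinct p" using p by (simp add: is_perm_def)
  obtain f where f: "\<forall>i<m. f i < length p" "\<forall>i j. i < j \<longrightarrow> j < m \<longrightarrow> f i < f j"
    "\<forall>i<m. \<forall>j<m. r ! i < r ! j \<longleftrightarrow> p ! f i < p ! f j"
    using c contained_emb[OF r dp] by blast
  have fmono: "f i < f j \<longleftrightarrow> i < j" if "i < m" "j < m" for i j
    using f(2) that by (metis less_asym nat_neq_iff)
  define ri where "ri a = perm_inv r ! a - 1" for a
  define g where "g a = p ! f (ri a) - 1" for a
  have ri: "ri a < m" "r ! ri a = Suc a" "perm_inv r ! a = Suc (ri a)" if "a < m" for a
    using perm_inv_at2[OF r that] by (auto simp: ri_def)
  have pv: "p ! f (ri a) \<in> {1..N}" if "a < m" for a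
    using perm_val[OF p] f(1) ri(1)[OF that] lp by auto
  have gN: "g a < N" if "a < m" for a using pv[OF that] by (auto simp: g_def)
  have ginv: "perm_inv p ! g a = Suc (f (ri a))" if "a < m" for a
    using perm_inv_at[OF p, of "f (ri a)"] f(1) ri(1)[OF that] lp by (simp add: g_def)
  have gmono: "g a < g b" if "a < b" "b < m" for a b
  proof -
    have "r ! ri a < r ! ri b" using ri that by auto
    then have "p ! f (ri a) < p ! f (ri b)" using f(3) ri(1) that by auto
    then show ?thesis using pv[of a] that by (auto simp: g_def)
  qed
  have dpi: "distinct (perm_inv p)" using is_perm_inv[OF p] by (simp add: is_perm_def)
  show ?thesis
    unfolding contained_emb[OF is_perm_inv[OF r] dpi]
  proof (rule exI[of _ g], intro conjI allI impI)
    fix i assume "i < m" then show "g i < length (perm_inv p)" using gN lp by simp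
  next
    fix i j assume "i < j" "j < m" then show "g i < g j" by (rule gmono)
  next
    fix i j assume i: "i < m" and j: "j < m"
    show "perm_inv r ! i < perm_inv r ! j \<longleftrightarrow> perm_inv p ! g i < perm_inv p ! g j"
      using ri(3)[OF i] ri(3)[OF j] ginv[OF i] ginv[OF j] fmono[OF ri(1)[OF i] ri(1)[OF j]] by simp
  qed
qed

lemma oplus_Nil_left[simp]: "oplus [] t = t"
  by (simp add: oplus_def)

lemma oplus_Nil_right[simp]: "oplus s [] = s"
  by (simp add: oplus_def)

lemma length_oplus[simp]: "length (oplus s t) = length s + length t"
  by (simp add: oplus_def)

lemma oplus_assoc: "oplus (oplus a b) c = oplus a (oplus b c)"
  by (simp add: oplus_def add.assoc)

lemma foldr_oplus_append: "foldr oplus (xs @ ys) [] = oplus (foldr oplus xs []) (foldr oplus ys [])"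
  by (induction xs) (simp_all add: oplus_assoc)

lemma foldr_oplus_concat:
  "foldr oplus (concat bss) [] = foldr oplus (map (\<lambda>bs. foldr oplus bs []) bss) []"
  by (induction bss) (simp_all add: foldr_oplus_append del: foldr_append)

lemma decomp:
  "is_perm (length p) p \<Longrightarrow> p \<noteq> [] \<Longrightarrow> \<exists>bs. p = foldr oplus bs [] \<and>
     (\<forall>b\<in>set bs. b \<noteq> [] \<and> is_perm (length b) b \<and> up_indec b \<and> length b \<le> length p)"
proof (induction "length p" arbitrary: p rule: less_induct)
  case less
  show ?case
  proof (cases "up_indec p")
    case True
    then show ?thesis using less.prems by (intro exI[of _ "[p]"]) auto
  next
    case False
    then obtain s t where st: "s \<noteq> []" "t \<noteq> []" "is_perm (length s) s" "is_perm (length t) t"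
      "p = oplus s t" unfolding up_indec_def by blast
    have ls: "length s < length p" "length t < length p" using st by auto
    obtain bs1 where b1: "s = foldr oplus bs1 []" "\<forall>b\<in>set bs1. b \<noteq> [] \<and> is_perm (length b) b \<and> up_indec b \<and> length b \<le> length s"
      using less.hyps[OF ls(1) st(3) st(1)] by blast
    obtain bs2 where b2: "t = foldr oplus bs2 []" "\<forall>b\<in>set bs2. b \<noteq> [] \<and> is_perm (length b) b \<and> up_indec b \<and> length b \<le> length t"
      using less.hyps[OF ls(2) st(4) st(2)] by blast
    have e: "p = foldr oplus (bs1 @ bs2) []" using b1(1) b2(1) st(5) by (simp only: foldr_oplus_append)
    have "\<forall>b\<in>set (bs1 @ bs2). b \<noteq> [] \<and> is_perm (length b) b \<and> up_indec b \<and> length b \<le> length p"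
    proof
      fix b assume "b \<in> set (bs1 @ bs2)"
      then have "b \<in> set bs1 \<or> b \<in> set bs2" by simp
      then show "b \<noteq> [] \<and> is_perm (length b) b \<and> up_indec b \<and> length b \<le> length p"
      proof
        assume "b \<in> set bs1" then show ?thesis using b1(2) ls(1) by fastforce
      next
        assume "b \<in> set bs2" then show ?thesis using b2(2) ls(2) by fastforce
      qed
    qed
    with e show ?thesis by blast
  qed
qed

definition chunked :: "nat \<Rightarrow> nat list \<Rightarrow> nat list list \<Rightarrow> bool" where
  "chunked k ys cs \<longleftrightarrow> ys = concat cs \<and> (\<forall>c\<in>set cs. c \<noteq> [] \<and> length c < k) \<and>
     sorted_wrt (\<lambda>a b. \<forall>x\<in>set a. \<forall>y\<in>set b. x < y) cs"

lemma std_append: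
  assumes d: "distinct (c @ r)" and lt: "\<forall>x\<in>set c. \<forall>y\<in>set r. x < y"
  shows "std (c @ r) = oplus (std c) (std r)"
proof -
  have 1: "rank (c @ r) x = rank c x" if "x \<in> set c" for x
  proof -
    have "{z \<in> set (c @ r). z \<le> x} = {z \<in> set c. z \<le> x}" using lt that by force
    then show ?thesis by (simp add: rank_def)
  qed
  have 2: "rank (c @ r) y = length c + rank r y" if "y \<in> set r" for y
  proof -
    have "{z \<in> set (c @ r). z \<le> y} = set c \<union> {z \<in> set r. z \<le> y}" using lt that by force
    moreover have "set c \<inter> {z \<in> set r. z \<le> y} = {}" using d by auto
    moreover have "card (set c) = length c" using d by (simp add: distinct_card)
    ultimately show ?thesis by (simp add: rank_def card_Un_disjoint)
  qed
  show ?thesis using 1 2 by (simp add: std_rank oplus_def)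
qed

lemma chunked_std:
  "distinct ys \<Longrightarrow> chunked k ys cs \<Longrightarrow> std ys = foldr oplus (map std cs) []"
proof (induction cs arbitrary: ys)
  case Nil
  then show ?case by (simp add: chunked_def std_def)
next
  case (Cons c cs)
  then have ys: "ys = c @ concat cs" and ch: "chunked k (concat cs) cs"
    by (auto simp: chunked_def)
  have lt: "\<forall>x\<in>set c. \<forall>y\<in>set (concat cs). x < y" using Cons.prems by (auto simp: chunked_def)
  have "std ys = oplus (std c) (std (concat cs))" using Cons.prems(1) lt ys by (simp add: std_append)
  then show ?case using Cons.IH[OF _ ch] Cons.prems(1) ys by simp
qed

lemma chunk_to_H:
  assumes d: "distinct ys" and ch: "chunked k ys cs"
  shows "H_plus k (std ys)"
proof -
  have "\<forall>c\<in>set cs. \<exists>bs. std c = foldr oplus bs [] \<and>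
     (\<forall>b\<in>set bs. b \<noteq> [] \<and> is_perm (length b) b \<and> up_indec b \<and> length b < k)"
  proof
    fix c assume c: "c \<in> set cs"
    have dc: "distinct c" using d ch c by (auto simp: chunked_def distinct_concat_iff)
    have ne: "c \<noteq> []" "length c < k" using ch c by (auto simp: chunked_def)
    have sne: "std c \<noteq> []" using ne(1) by (cases c) (auto simp: std_def)
    have ip: "is_perm (length (std c)) (std c)" using is_perm_std[OF dc] by simp
    obtain bs where bsf: "std c = foldr oplus bs []"
      "\<forall>b\<in>set bs. b \<noteq> [] \<and> is_perm (length b) b \<and> up_indec b \<and> length b \<le> length (std c)"
      using decomp[OF ip sne] by blast
    have "\<forall>b\<in>set bs. b \<noteq> [] \<and> is_perm (length b) b \<and> up_indec b \<and> length b < k"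
      using bsf(2) ne(2) length_std[of c] by fastforce
    with bsf(1) show "\<exists>bs. std c = foldr oplus bs [] \<and>
     (\<forall>b\<in>set bs. b \<noteq> [] \<and> is_perm (length b) b \<and> up_indec b \<and> length b < k)"
      by blast
  qed
  then obtain F where F: "\<forall>c\<in>set cs. std c = foldr oplus (F c) [] \<and>
     (\<forall>b\<in>set (F c). b \<noteq> [] \<and> is_perm (length b) b \<and> up_indec b \<and> length b < k)"
    by metis
  have "std ys = foldr oplus (map std cs) []" using d ch by (rule chunked_std)
  also have "map std cs = map (\<lambda>bs. foldr oplus bs []) (map F cs)" using F by auto
  finally have "std ys = foldr oplus (concat (map F cs)) []" by (simp add: foldr_oplus_concat)
  then show ?thesis unfolding H_plus_def using F by (intro exI[of _ "concat (map F cs)"]) auto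
qed

lemma set_oplus: "set (oplus s t) = set s \<union> (\<lambda>x. length s + x) ` set t"
  by (simp add: oplus_def)

lemma foldr_oplus_ge1:
  "\<forall>b\<in>set bs. is_perm (length b) b \<Longrightarrow> x \<in> set (foldr oplus bs []) \<Longrightarrow> x \<ge> 1"
proof (induction bs arbitrary: x)
  case Nil
  then show ?case by simp
next
  case (Cons a bs)
  have "x \<in> set a \<or> (\<exists>y\<in>set (foldr oplus bs []). x = length a + y)"
    using Cons.prems(2) by (auto simp: set_oplus)
  then show ?case
  proof
    assume "x \<in> set a" then show ?thesis using Cons.prems(1) by (auto simp: is_perm_def)
  next
    assume "\<exists>y\<in>set (foldr oplus bs []). x = length a + y"
    then obtain y where "y \<in> set (foldr oplus bs [])" "x = length a + y" by blast
    then show ?thesis using Cons.IH[of y] Cons.prems(1) by auto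
  qed
qed

lemma H_to_chunk:
  "distinct ys \<Longrightarrow> std ys = foldr oplus bs [] \<Longrightarrow>
   \<forall>b\<in>set bs. b \<noteq> [] \<and> is_perm (length b) b \<and> length b < k \<Longrightarrow> \<exists>cs. chunked k ys cs"
proof (induction bs arbitrary: ys)
  case Nil
  then have "ys = []" by (metis foldr.simps(1) id_apply length_0_conv length_std)
  then have "chunked k ys []" by (simp add: chunked_def)
  then show ?case by blast
next
  case (Cons b bs)
  define q where "q = foldr oplus bs []"
  have bp: "b \<noteq> []" "is_perm (length b) b" "length b < k" using Cons.prems by auto
  have q1: "\<forall>x\<in>set q. x \<ge> 1" using foldr_oplus_ge1[of bs] Cons.prems(3) by (auto simp: q_def)
  have e: "std ys = b @ map (\<lambda>x. length b + x) q" using Cons.prems(2) unfolding q_def by (simp add: oplus_def[of b])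
  define c where "c = take (length b) ys"
  define r where "r = drop (length b) ys"
  have ycr: "ys = c @ r" by (simp add: c_def r_def)
  from arg_cong[OF e, of length] have "length ys = length b + length q" by simp
  then have lc: "length c = length b" by (simp add: c_def)
  have "map (rank ys) c @ map (rank ys) r = map (rank ys) (c @ r)" by simp
  also have "\<dots> = map (rank ys) ys" using ycr by simp
  also have "\<dots> = std ys" by (simp add: std_rank)
  also note e
  finally have "map (rank ys) c @ map (rank ys) r = b @ map (\<lambda>x. length b + x) q" .
  then have mc: "map (rank ys) c = b" and mr: "map (rank ys) r = map (\<lambda>x. length b + x) q"
    using lc by (auto simp: append_eq_append_conv)
  have lt: "\<forall>x\<in>set c. \<forall>y\<in>set r. x < y"
  proof (intro ballI)
    fix x y assume x: "x \<in> set c" and y: "y \<in> set r"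
    have "rank ys x \<in> set (map (rank ys) c)" using x by simp
    then have "rank ys x \<in> set b" using mc by simp
    then have "rank ys x \<le> length b" using bp(2) by (auto simp: is_perm_def)
    moreover have "rank ys y \<in> set (map (rank ys) r)" using y by simp
    then have "rank ys y \<in> set (map (\<lambda>x. length b + x) q)" using mr by simp
    then have "rank ys y > length b" using q1 by auto
    ultimately have "rank ys x < rank ys y" by linarith
    moreover have "x \<in> set ys" "y \<in> set ys" using x y ycr by auto
    ultimately show "x < y" using rank_less[of x ys y] by simp
  qed
  have dcr: "distinct (c @ r)" using Cons.prems(1) by (simp only: ycr[symmetric])
  have "std (c @ r) = oplus (std c) (std r)" by (rule std_append[OF dcr lt])
  then have "std ys = std c @ map (\<lambda>x. length c + x) (std r)" by (simp only: ycr[symmetric] oplus_def length_std)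
  then have "std ys = std c @ map (\<lambda>x. length b + x) (std r)" by (simp only: lc)
  then have "std c @ map (\<lambda>x. length b + x) (std r) = b @ map (\<lambda>x. length b + x) q" using e by metis
  moreover have "length (std c) = length b" using lc by simp
  ultimately have "map (\<lambda>x. length b + x) (std r) = map (\<lambda>x. length b + x) q"
    using append_eq_append_conv by blast
  moreover have "inj (\<lambda>x::nat. length b + x)" by (simp add: inj_def)
  ultimately have sr: "std r = q" by (rule map_injective)
  obtain cs where cs: "chunked k r cs" using Cons.IH[of r] Cons.prems sr dcr q_def by auto
  have cne: "c \<noteq> []" using lc bp by auto
  show ?case
  proof (rule exI[of _ "c # cs"])
    show "chunked k ys (c # cs)" using cs cne lc bp lt ycr by (auto simp: chunked_def)
  qed
qed

lemma chunked_take: "chunked k ys cs \<Longrightarrow> \<exists>cs'. chunked k (take i ys) cs'"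
proof (induction cs arbitrary: i ys)
  case Nil
  then have "ys = []" by (simp add: chunked_def)
  then have "chunked k (take i ys) []" "chunked k (drop i ys) []" by (simp_all add: chunked_def)
  then show ?case by blast
next
  case (Cons c cs)
  then have ys: "ys = c @ concat cs" and ch: "chunked k (concat cs) cs" and
    lt: "\<forall>d\<in>set cs. \<forall>x\<in>set c. \<forall>y\<in>set d. x < y" and cc: "c \<noteq> []" "length c < k"
    by (auto simp: chunked_def)
  show ?case
  proof (cases "i \<le> length c")
    case True
    then have "take i ys = take i c" using ys by simp
    then show ?thesis using cc
      by (intro exI[of _ "if take i c = [] then [] else [take i c]"]) (auto simp: chunked_def)
  next
    case False
    then have t: "take i ys = c @ take (i - length c) (concat cs)" using ys by simp
    obtain cs' where cs': "chunked k (take (i - length c) (concat cs)) cs'" using Cons.IH[OF ch] by blast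
    have "\<forall>d\<in>set cs'. \<forall>x\<in>set c. \<forall>y\<in>set d. x < y"
    proof (intro ballI)
      fix d x y assume "d \<in> set cs'" "x \<in> set c" "y \<in> set d"
      then have "y \<in> set (concat cs')" by auto
      then have "y \<in> set (take (i - length c) (concat cs))" using cs' by (simp add: chunked_def)
      then have "y \<in> set (concat cs)" by (rule in_set_takeD)
      then show "x < y" using lt \<open>x \<in> set c\<close> by auto
    qed
    then show ?thesis using cs' cc t by (intro exI[of _ "c # cs'"]) (auto simp: chunked_def)
  qed
qed

lemma chunked_drop: "chunked k ys cs \<Longrightarrow> \<exists>cs'. chunked k (drop i ys) cs'"
proof (induction cs arbitrary: i ys)
  case Nil
  then have "ys = []" by (simp add: chunked_def)
  then have "chunked k (take i ys) []" "chunked k (drop i ys) []" by (simp_all add: chunked_def)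
  then show ?case by blast
next
  case (Cons c cs)
  then have ys: "ys = c @ concat cs" and ch: "chunked k (concat cs) cs" and
    lt: "\<forall>d\<in>set cs. \<forall>x\<in>set c. \<forall>y\<in>set d. x < y" and cc: "c \<noteq> []" "length c < k"
    by (auto simp: chunked_def)
  show ?case
  proof (cases "i < length c")
    case True
    then have t: "drop i ys = drop i c @ concat cs" using ys by simp
    have "\<forall>d\<in>set cs. \<forall>x\<in>set (drop i c). \<forall>y\<in>set d. x < y" using lt by (auto dest: in_set_dropD)
    then show ?thesis using cc ch t True
      by (intro exI[of _ "drop i c # cs"]) (auto simp: chunked_def)
  next
    case False
    then have "drop i ys = drop (i - length c) (concat cs)" using ys by simp
    then show ?thesis using Cons.IH[OF ch] by metis
  qed
qed

lemma H_plus_chunk: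
  assumes d: "distinct ys" shows "H_plus k (std ys) \<longleftrightarrow> (\<exists>cs. chunked k ys cs)"
proof
  assume "H_plus k (std ys)"
  then obtain bs where b: "std ys = foldr oplus bs []"
    "\<forall>b\<in>set bs. b \<noteq> [] \<and> is_perm (length b) b \<and> up_indec b \<and> length b < k"
    unfolding H_plus_def by blast
  from b(2) have "\<forall>b\<in>set bs. b \<noteq> [] \<and> is_perm (length b) b \<and> length b < k" by blast
  then show "\<exists>cs. chunked k ys cs" by (rule H_to_chunk[OF d b(1)])
next
  assume "\<exists>cs. chunked k ys cs"
  then obtain cs where "chunked k ys cs" by blast
  then show "H_plus k (std ys)" by (rule chunk_to_H[OF d])
qed

lemma H_plus_take: "distinct ys \<Longrightarrow> H_plus k (std ys) \<Longrightarrow> H_plus k (std (take i ys))"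
proof -
  assume d: "distinct ys" and h: "H_plus k (std ys)"
  then obtain cs where "chunked k ys cs" using H_plus_chunk by blast
  then obtain cs' where "chunked k (take i ys) cs'" using chunked_take by blast
  then show ?thesis using H_plus_chunk[of "take i ys"] d by auto
qed

lemma H_plus_drop: "distinct ys \<Longrightarrow> H_plus k (std ys) \<Longrightarrow> H_plus k (std (drop i ys))"
proof -
  assume d: "distinct ys" and h: "H_plus k (std ys)"
  then obtain cs where "chunked k ys cs" using H_plus_chunk by blast
  then obtain cs' where "chunked k (drop i ys) cs'" using chunked_drop by blast
  then show ?thesis using H_plus_chunk[of "drop i ys"] d by auto
qed

lemma rev_ominus: "rev (ominus s t) = oplus (rev t) (rev s)"
  by (simp add: ominus_def oplus_def rev_map)

lemma rev_oplus: "rev (oplus s t) = ominus (rev t) (rev s)"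
  by (simp add: ominus_def oplus_def rev_map)

lemma foldr_oplus_gen: "foldr oplus xs z = oplus (foldr oplus xs []) z"
  by (induction xs) (simp_all add: oplus_assoc)

lemma foldr_ominus_rev: "rev (foldr ominus bs []) = foldr oplus (rev (map rev bs)) []"
proof (induction bs)
  case Nil
  then show ?case by simp
next
  case (Cons a bs)
  have "rev (foldr ominus (a # bs) []) = oplus (rev (foldr ominus bs [])) (rev a)"
    by (simp add: rev_ominus)
  also have "\<dots> = oplus (foldr oplus (rev (map rev bs)) []) (rev a)" using Cons.IH by simp
  also have "\<dots> = foldr oplus (rev (map rev bs)) (rev a)" by (rule foldr_oplus_gen[symmetric])
  also have "\<dots> = foldr oplus (rev (map rev (a # bs))) []" by simp
  finally show ?case .
qed

lemma is_perm_rev: "is_perm n (rev b) \<longleftrightarrow> is_perm n b"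
  by (simp add: is_perm_def)

lemma down_up_rev: "down_indec b \<longleftrightarrow> up_indec (rev b)"
proof
  assume d: "down_indec b"
  show "up_indec (rev b)" unfolding up_indec_def
  proof
    assume "\<exists>s t. s \<noteq> [] \<and> t \<noteq> [] \<and> is_perm (length s) s \<and> is_perm (length t) t \<and> rev b = oplus s t"
    then obtain s t where st: "s \<noteq> []" "t \<noteq> []" "is_perm (length s) s" "is_perm (length t) t" "rev b = oplus s t"
      by blast
    have "b = ominus (rev t) (rev s)" using rev_oplus[of s t] st(5) by (metis rev_rev_ident)
    moreover have "rev t \<noteq> []" "rev s \<noteq> []" "is_perm (length (rev t)) (rev t)" "is_perm (length (rev s)) (rev s)"
      using st by (simp_all add: is_perm_rev)
    ultimately show False using d unfolding down_indec_def by blast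
  qed
next
  assume d: "up_indec (rev b)"
  show "down_indec b" unfolding down_indec_def
  proof
    assume "\<exists>s t. s \<noteq> [] \<and> t \<noteq> [] \<and> is_perm (length s) s \<and> is_perm (length t) t \<and> b = ominus s t"
    then obtain s t where st: "s \<noteq> []" "t \<noteq> []" "is_perm (length s) s" "is_perm (length t) t" "b = ominus s t"
      by blast
    have "rev b = oplus (rev t) (rev s)" using rev_ominus[of s t] st(5) by simp
    moreover have "rev t \<noteq> []" "rev s \<noteq> []" "is_perm (length (rev t)) (rev t)" "is_perm (length (rev s)) (rev s)"
      using st by (simp_all add: is_perm_rev)
    ultimately show False using d unfolding up_indec_def by blast
  qed
qed

lemma H_minus_rev: "H_minus k q \<longleftrightarrow> H_plus k (rev q)"
  unfolding H_minus_def H_plus_def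
proof safe
  fix bs assume "\<forall>b\<in>set bs. b \<noteq> [] \<and> is_perm (length b) b \<and> down_indec b \<and> length b < k"
  then show "\<exists>bsa. rev (foldr ominus bs []) = foldr oplus bsa [] \<and>
     (\<forall>b\<in>set bsa. b \<noteq> [] \<and> is_perm (length b) b \<and> up_indec b \<and> length b < k)"
    by (intro exI[of _ "rev (map rev bs)"]) (auto simp: foldr_ominus_rev is_perm_rev down_up_rev)
next
  fix bs assume a: "rev q = foldr oplus bs []"
    "\<forall>b\<in>set bs. b \<noteq> [] \<and> is_perm (length b) b \<and> up_indec b \<and> length b < k"
  have "rev (foldr ominus (rev (map rev bs)) []) = foldr oplus bs []"
    by (simp add: foldr_ominus_rev rev_map comp_def)
  then have "q = foldr ominus (rev (map rev bs)) []" using a(1) by (metis rev_rev_ident)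
  then show "\<exists>bs. q = foldr ominus bs [] \<and> (\<forall>b\<in>set bs. b \<noteq> [] \<and> is_perm (length b) b \<and> down_indec b \<and> length b < k)"
    using a(2) by (intro exI[of _ "rev (map rev bs)"]) (auto simp: is_perm_rev down_up_rev)
qed

lemma std_rev: "std (rev ys) = rev (std ys)"
  by (simp add: std_def rev_map)

lemma H_minus_take: "distinct ys \<Longrightarrow> H_minus k (std ys) \<Longrightarrow> H_minus k (std (take i ys))"
  using H_plus_drop[of "rev ys" k "length ys - i"]
  by (simp add: H_minus_rev std_rev[symmetric] rev_take)

lemma H_minus_drop: "distinct ys \<Longrightarrow> H_minus k (std ys) \<Longrightarrow> H_minus k (std (drop i ys))"
  using H_plus_take[of "rev ys" k "length ys - i"]
  by (simp add: H_minus_rev std_rev[symmetric] rev_drop)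

lemma good_single: "k \<ge> 2 \<Longrightarrow> H_plus k (std [x])"
proof -
  assume k: "k \<ge> 2"
  have e: "{y. y = x \<and> y \<le> x} = {x}" by auto
  have s: "std [x] = [1]" by (simp add: std_def e)
  have u: "up_indec [1]" unfolding up_indec_def
    by (auto simp: oplus_def Cons_eq_append_conv)
  have "foldr oplus [[1]] [] = [1]" by simp
  then show ?thesis unfolding s H_plus_def using u k
    by (intro exI[of _ "[[1]]"]) (auto simp: is_perm_def)
qed


definition part :: "(nat list \<Rightarrow> bool) \<Rightarrow> nat list \<Rightarrow> nat list list \<Rightarrow> bool" where
  "part Q xs segs \<longleftrightarrow> concat segs = xs \<and> (\<forall>s\<in>set segs. s \<noteq> [] \<and> Q s)"

lemma drop_part:
  assumes her: "\<And>zs i. distinct zs \<Longrightarrow> Q zs \<Longrightarrow> Q (drop i zs)"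
  shows "distinct xs \<Longrightarrow> part Q xs segs \<Longrightarrow> \<exists>segs'. part Q (drop d xs) segs' \<and> length segs' \<le> length segs"
proof (induction segs arbitrary: d xs)
  case Nil
  then have "part Q (drop d xs) []" by (simp add: part_def)
  then show ?case by auto
next
  case (Cons s rest)
  have xs: "xs = s @ concat rest" and s: "s \<noteq> []" "Q s" and pr: "part Q (concat rest) rest"
    using Cons.prems by (auto simp: part_def)
  have ds: "distinct s" "distinct (concat rest)" using Cons.prems(1) xs by auto
  show ?case
  proof (cases "d < length s")
    case True
    have "drop d xs = drop d s @ concat rest" using xs True by simp
    moreover have "drop d s \<noteq> []" "Q (drop d s)" using True her[OF ds(1) s(2)] by auto
    ultimately have "part Q (drop d xs) (drop d s # rest)" using pr by (auto simp: part_def)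
    then show ?thesis by fastforce
  next
    case False
    then have "drop d xs = drop (d - length s) (concat rest)" using xs by simp
    then show ?thesis using Cons.IH[OF ds(2) pr, of "d - length s"] by fastforce
  qed
qed

lemma greedy_opt:
  assumes her: "\<And>zs i. distinct zs \<Longrightarrow> P (std zs) \<Longrightarrow> P (std (drop i zs))"
  shows "distinct xs \<Longrightarrow> part (\<lambda>zs. P (std zs)) xs segs \<Longrightarrow> greedy_count P f xs \<le> length segs"
proof (induction f arbitrary: xs segs)
  case 0
  then show ?case by simp
next
  case (Suc f)
  show ?case
  proof (cases "xs = []")
    case True
    then show ?thesis by simp
  next
    case False
    then obtain s rest where segs: "segs = s # rest"
      using Suc.prems(2) by (cases segs) (auto simp: part_def)
    have xs: "xs = s @ concat rest" and s: "s \<noteq> []" "P (std s)"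
      and pr: "part (\<lambda>zs. P (std zs)) (concat rest) rest"
      using Suc.prems(2) segs by (auto simp: part_def)
    define m where "m = (GREATEST j. j \<le> length xs \<and> P (std (take j xs)))"
    have "length s \<le> length xs \<and> P (std (take (length s) xs))" using xs s by simp
    then have sm: "length s \<le> m" unfolding m_def
      by (rule Greatest_le_nat[where b = "length xs"]) auto
    have "drop m xs = drop (m - length s) (concat rest)" using xs sm
      by (metis append_eq_conv_conj drop_drop le_add_diff_inverse2)
    moreover have "distinct (concat rest)" using Suc.prems(1) xs by simp
    ultimately obtain segs' where sg: "part (\<lambda>zs. P (std zs)) (drop m xs) segs'" "length segs' \<le> length rest"
      using drop_part[of "\<lambda>zs. P (std zs)", OF her _ pr, of "m - length s"] by auto
    have "greedy_count P f (drop m xs) \<le> length segs'"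
      using Suc.IH[OF _ sg(1)] Suc.prems(1) by simp
    then show ?thesis using False sg(2) segs by (simp add: m_def Let_def)
  qed
qed

lemma greedy_real:
  assumes single: "\<And>x. P (std [x])"
  shows "length xs \<le> f \<Longrightarrow> \<exists>segs. part (\<lambda>zs. P (std zs)) xs segs \<and> length segs = greedy_count P f xs"
proof (induction f arbitrary: xs)
  case 0
  then have "part (\<lambda>zs. P (std zs)) xs []" by (simp add: part_def)
  then show ?case by auto
next
  case (Suc f)
  show ?case
  proof (cases "xs = []")
    case True
    then have "part (\<lambda>zs. P (std zs)) xs []" by (simp add: part_def)
    then show ?thesis using True by auto
  next
    case False
    define m where "m = (GREATEST j. j \<le> length xs \<and> P (std (take j xs)))"
    have t1: "1 \<le> length xs \<and> P (std (take 1 xs))" using False single[of "hd xs"]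
      by (cases xs) auto
    have m1: "1 \<le> m" unfolding m_def
      by (rule Greatest_le_nat[where b = "length xs" and P = "\<lambda>j. j \<le> length xs \<and> P (std (take j xs))", OF t1]) auto
    have mP: "m \<le> length xs \<and> P (std (take m xs))" unfolding m_def
      by (rule GreatestI_nat[where b = "length xs" and P = "\<lambda>j. j \<le> length xs \<and> P (std (take j xs))", OF t1]) auto
    have "length (drop m xs) \<le> f" using Suc.prems m1 by simp
    then obtain segs where sg: "part (\<lambda>zs. P (std zs)) (drop m xs) segs"
      "length segs = greedy_count P f (drop m xs)" using Suc.IH by blast
    have tne: "take m xs \<noteq> []" using m1 False by simp
    have "part (\<lambda>zs. P (std zs)) xs (take m xs # segs)"
      using sg(1) tne mP by (auto simp: part_def)
    moreover have "greedy_count P (Suc f) xs = Suc (greedy_count P f (drop m xs))"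
      using False by (simp add: m_def Let_def)
    ultimately show ?thesis using sg(2) by (intro exI[of _ "take m xs # segs"]) auto
  qed
qed

lemma insert_part:
  assumes hert: "\<And>zs i. distinct zs \<Longrightarrow> Q zs \<Longrightarrow> Q (take i zs)"
    and herd: "\<And>zs i. distinct zs \<Longrightarrow> Q zs \<Longrightarrow> Q (drop i zs)"
    and single: "Q [x]"
  shows "distinct (a @ x # b) \<Longrightarrow> part Q (a @ b) segs \<Longrightarrow>
    \<exists>segs'. part Q (a @ x # b) segs' \<and> length segs' \<le> length segs + 2"
proof (induction segs arbitrary: a b)
  case Nil
  then have "a = []" "b = []" by (auto simp: part_def)
  then have "part Q (a @ x # b) [[x]]" using single by (simp add: part_def)
  then show ?case by fastforce
next
  case (Cons s rest)
  have e: "s @ concat rest = a @ b" and s: "s \<noteq> []" "Q s" and pr: "part Q (concat rest) rest"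
    using Cons.prems(2) by (auto simp: part_def)
  from e obtain us where "(s = a @ us \<and> us @ concat rest = b) \<or> (s @ us = a \<and> concat rest = us @ b)"
    by (auto simp: append_eq_append_conv2)
  then show ?case
  proof
    assume h: "s = a @ us \<and> us @ concat rest = b"
    have ds: "distinct s" using Cons.prems(1) h by auto
    have qa: "Q a" using hert[OF ds s(2), of "length a"] h by simp
    have qu: "Q us" using herd[OF ds s(2), of "length a"] h by simp
    define L where "L = (if a = [] then [] else [a]) @ [[x]] @ (if us = [] then [] else [us]) @ rest"
    have "concat L = a @ x # b" using h by (cases "us = []"; cases "a = []") (auto simp: L_def)
    moreover have "\<forall>t\<in>set L. t \<noteq> [] \<and> Q t" using qa qu single pr by (auto simp: L_def part_def)
    moreover have "length L \<le> length (s # rest) + 2" by (simp add: L_def)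
    ultimately show ?thesis by (auto simp: part_def)
  next
    assume h: "s @ us = a \<and> concat rest = us @ b"
    have d2: "distinct (us @ x # b)" using Cons.prems(1) h by auto
    have "part Q (us @ b) rest" using pr h by simp
    then obtain segs' where sg: "part Q (us @ x # b) segs'" "length segs' \<le> length rest + 2"
      using Cons.IH[OF d2] by blast
    have "part Q (a @ x # b) (s # segs')" using sg(1) s h by (auto simp: part_def)
    then show ?thesis using sg(2) by fastforce
  qed
qed


definition altv :: "nat list \<Rightarrow> bool" where
  "altv ys \<longleftrightarrow> (\<forall>i<length ys. \<forall>j<length ys. even i \<and> odd j \<longrightarrow> ys ! j < ys ! i)"

lemma alt_std: "alternating (std ys) \<longleftrightarrow> altv ys"
  by (simp add: alternating_def altv_def std_nth_less)

lemma altv_remove2: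
  assumes a: "altv (a @ b @ c)" and lb: "length b = 2"
  shows "altv (a @ c)"
  unfolding altv_def
proof (intro allI impI)
  fix i j assume i: "i < length (a @ c)" and j: "j < length (a @ c)" and ij: "even i \<and> odd j"
  define f where "f k = (if k < length a then k else k + 2)" for k
  have key: "(a @ c) ! k = (a @ b @ c) ! f k" if "k < length (a @ c)" for k
    using that lb by (auto simp: f_def nth_append)
  have fl: "f k < length (a @ b @ c)" if "k < length (a @ c)" for k
    using that lb by (auto simp: f_def)
  have fp: "even (f k) \<longleftrightarrow> even k" for k by (simp add: f_def)
  show "(a @ c) ! j < (a @ c) ! i"
    using a fl[OF i] fl[OF j] fp[of i] fp[of j] ij key[OF i] key[OF j]
    unfolding altv_def by auto
qed

lemma subseq_tl: "subseq (tl w) w"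
  by (cases w) auto

lemma subseq_butlast: "subseq (butlast w) w"
proof (cases "w = []")
  case False
  then have "w = butlast w @ [last w]" by simp
  then show ?thesis by (metis subseq_order.order_refl subseq_rev_drop_many)
qed simp

lemma del_alt:
  assumes sub: "subseq ys (u @ x # v)" and alt: "altv ys"
  shows "\<exists>zs. subseq zs (u @ v) \<and> altv zs \<and> length ys \<le> length zs + 2"
proof -
  obtain ys1 ys2 where y: "ys = ys1 @ ys2" "subseq ys1 u" "subseq ys2 (x # v)"
    using sub by (rule subseq_appendE)
  from y(3) have "subseq ys2 v \<or> (\<exists>w. ys2 = x # w \<and> subseq w v)"
    by (cases ys2) (auto split: if_splits)
  then show ?thesis
  proof
    assume "subseq ys2 v"
    then have "subseq ys (u @ v)" using y by (simp add: list_emb_append_mono)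
    then show ?thesis using alt by auto
  next
    assume "\<exists>w. ys2 = x # w \<and> subseq w v"
    then obtain w where w: "ys2 = x # w" "subseq w v" by blast
    show ?thesis
    proof (cases "w = []")
      case False
      have "ys = ys1 @ [x, hd w] @ tl w" using w False y(1) by simp
      then have "altv (ys1 @ tl w)" using alt altv_remove2[of ys1 "[x, hd w]" "tl w"] by simp
      moreover have "subseq (tl w) v" using w(2) subseq_tl[of w] by (metis subseq_order.order_trans)
      then have "subseq (ys1 @ tl w) (u @ v)" using y(2) by (simp add: list_emb_append_mono)
      moreover have "length ys \<le> length (ys1 @ tl w) + 2" using y(1) w(1) by simp
      ultimately show ?thesis by blast
    next
      case True
      show ?thesis
      proof (cases "ys1 = []")
        case True
        then have "length ys \<le> length ([]::nat list) + 2" using y(1) w(1) \<open>w = []\<close> by simp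
        moreover have "altv []" by (simp add: altv_def)
        ultimately show ?thesis by (intro exI[of _ "[]"]) auto
      next
        case False
        have "ys = butlast ys1 @ [last ys1, x] @ []" using y(1) w(1) \<open>w = []\<close> False by simp
        then have "altv (butlast ys1 @ [])" using alt altv_remove2[of "butlast ys1" "[last ys1, x]" "[]"] by simp
        moreover have "subseq (butlast ys1) u" using y(2) subseq_butlast[of ys1] by (metis subseq_order.order_trans)
        then have "subseq (butlast ys1) (u @ v)" by (rule subseq_rev_drop_many)
        moreover have "length ys \<le> length (butlast ys1) + 2" using y(1) w(1) \<open>w = []\<close> by simp
        ultimately show ?thesis by auto
      qed
    qed
  qed
qed

lemma subseq_one_less:
  "subseq xs ys \<Longrightarrow> length ys = Suc (length xs) \<Longrightarrow> \<exists>u x v. ys = u @ x # v \<and> xs = u @ v"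
proof (induction rule: list_emb.induct)
  case (list_emb_Nil ys)
  then obtain y where "ys = [y]" by (cases ys) auto
  then show ?case by auto
next
  case (list_emb_Cons xs ys y)
  then have "xs = ys" using subseq_same_length by (metis Suc_inject length_Cons)
  then show ?case by (intro exI[of _ "[]"]) auto
next
  case (list_emb_Cons2 x y xs ys)
  then obtain u z v where "ys = u @ z # v" "xs = u @ v" by auto
  then show ?case using list_emb_Cons2.hyps(1) by (intro exI[of _ "y # u"]) auto
qed

lemma al_step:
  assumes s: "is_perm n \<sigma>" and t: "is_perm (Suc n) \<tau>" and st: "contained \<sigma> \<tau>"
    and ar: "alternating r" and rt: "contained r \<tau>"
  shows "\<exists>r'. alternating r' \<and> contained r' \<sigma> \<and> length r \<le> length r' + 2"
proof -
  obtain ys where ys: "subseq ys \<tau>" "std ys = r" using rt unfolding contained_iff by blast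
  obtain t2 where t2: "subseq t2 \<tau>" "std t2 = \<sigma>" using st unfolding contained_iff by blast
  have "length t2 = n" using t2(2) is_perm_length[OF s] by (metis length_std)
  moreover have "length \<tau> = Suc n" using t by (rule is_perm_length)
  ultimately obtain u x v where uv: "\<tau> = u @ x # v" "t2 = u @ v" using subseq_one_less[OF t2(1)] by auto
  have av: "altv ys" using ar ys(2) alt_std by blast
  obtain zs where zs: "subseq zs (u @ v)" "altv zs" "length ys \<le> length zs + 2"
    using del_alt[of ys u x v] ys(1) uv(1) av by blast
  have dt: "distinct \<tau>" using t by (simp add: is_perm_def)
  have d2: "distinct t2" using t2(1) dt by (auto simp: subseq_conv_nths)
  have "contained (std zs) (std t2)" using contained_std[OF d2] zs(1) uv(2) by simp
  then have "contained (std zs) \<sigma>" using t2(2) by simp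
  moreover have "alternating (std zs)" using zs(2) alt_std by blast
  moreover have "length r \<le> length (std zs) + 2" using zs(3) ys(2) by (metis length_std)
  ultimately show ?thesis by blast
qed

lemma contained_length: "contained r p \<Longrightarrow> length r \<le> length p"
  unfolding contained_iff by (metis length_std list_emb_length)

lemma al_set_finite: "finite {length r | r. alternating r \<and> (contained r p \<or> contained r (perm_inv p))}"
proof (rule finite_subset[of _ "{..length p}"])
  show "{length r | r. alternating r \<and> (contained r p \<or> contained r (perm_inv p))} \<subseteq> {..length p}"
    using contained_length length_perm_inv by fastforce
qed simp

lemma al_set_ne: "{length r | r. alternating r \<and> (contained r p \<or> contained r (perm_inv p))} \<noteq> {}"
proof -
  have "alternating []" by (simp add: alternating_def)
  moreover have "contained [] p" unfolding contained_iff by (intro exI[of _ "[]"]) (simp add: std_def)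
  ultimately show ?thesis by blast
qed

lemma al_bound:
  assumes s: "is_perm n \<sigma>" and t: "is_perm (Suc n) \<tau>" and st: "contained \<sigma> \<tau>"
  shows "al \<tau> \<le> al \<sigma> + 2"
proof -
  have "al \<tau> \<in> {length r | r. alternating r \<and> (contained r \<tau> \<or> contained r (perm_inv \<tau>))}"
    unfolding al_def using al_set_finite al_set_ne by (rule Max_in)
  then obtain r where r: "al \<tau> = length r" "alternating r" "contained r \<tau> \<or> contained r (perm_inv \<tau>)"
    by blast
  have "\<exists>r'. alternating r' \<and> (contained r' \<sigma> \<or> contained r' (perm_inv \<sigma>)) \<and> length r \<le> length r' + 2"
    using r(3)
  proof
    assume "contained r \<tau>"
    then show ?thesis using al_step[OF s t st r(2)] by blast
  next
    assume "contained r (perm_inv \<tau>)"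
    moreover have "contained (perm_inv \<sigma>) (perm_inv \<tau>)" by (rule contained_inv[OF s t st])
    ultimately show ?thesis using al_step[OF is_perm_inv[OF s] is_perm_inv[OF t] _ r(2)] by blast
  qed
  then obtain r' where r': "alternating r'" "contained r' \<sigma> \<or> contained r' (perm_inv \<sigma>)" "length r \<le> length r' + 2"
    by blast
  have "length r' \<le> al \<sigma>"
    unfolding al_def using al_set_finite r'(1,2) by (intro Max_ge) auto
  then show ?thesis using r(1) r'(3) by simp
qed

lemma P_take:
  "distinct zs \<Longrightarrow> H_plus k (std zs) \<or> H_minus k (std zs) \<Longrightarrow> H_plus k (std (take i zs)) \<or> H_minus k (std (take i zs))"
  using H_plus_take H_minus_take by blast

lemma P_drop:
  "distinct zs \<Longrightarrow> H_plus k (std zs) \<or> H_minus k (std zs) \<Longrightarrow> H_plus k (std (drop i zs)) \<or> H_minus k (std (drop i zs))"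
  using H_plus_drop H_minus_drop by blast

lemma map_concat_split:
  "concat segs = map f ys \<Longrightarrow> \<exists>segs2. concat segs2 = ys \<and> segs = map (map f) segs2"
proof (induction segs arbitrary: ys)
  case Nil
  then show ?case by auto
next
  case (Cons s segs)
  then have "map f ys = s @ concat segs" by simp
  then obtain us vs where uv: "ys = us @ vs" "s = map f us" "concat segs = map f vs"
    by (auto simp: map_eq_append_conv)
  obtain segs2 where "concat segs2 = vs" "segs = map (map f) segs2" using Cons.IH[OF uv(3)] by blast
  then show ?case using uv by (intro exI[of _ "us # segs2"]) auto
qed

lemma sk_bound:
  assumes s: "is_perm n \<sigma>" and t: "is_perm (Suc n) \<tau>" and st: "contained \<sigma> \<tau>" and k: "k \<ge> 2"
  shows "greedy_count (\<lambda>q. H_plus k q \<or> H_minus k q) (length \<tau>) \<tau>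
     \<le> greedy_count (\<lambda>q. H_plus k q \<or> H_minus k q) (length \<sigma>) \<sigma> + 2"
proof -
  define P where "P = (\<lambda>q. H_plus k q \<or> H_minus k q)"
  define Q where "Q = (\<lambda>zs. P (std zs))"
  have hert: "\<And>zs i. distinct zs \<Longrightarrow> Q zs \<Longrightarrow> Q (take i zs)" unfolding Q_def P_def by (rule P_take)
  have herd: "\<And>zs i. distinct zs \<Longrightarrow> Q zs \<Longrightarrow> Q (drop i zs)" unfolding Q_def P_def by (rule P_drop)
  have single: "\<And>x. Q [x]" unfolding Q_def P_def using good_single[OF k] by blast
  obtain t2 where t2: "subseq t2 \<tau>" "std t2 = \<sigma>" using st unfolding contained_iff by blast
  have "length t2 = n" using t2(2) is_perm_length[OF s] by (metis length_std)
  moreover have lt: "length \<tau> = Suc n" using t by (rule is_perm_length)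
  ultimately obtain u x v where uv: "\<tau> = u @ x # v" "t2 = u @ v" using subseq_one_less[OF t2(1)] by auto
  have dt: "distinct \<tau>" using t by (simp add: is_perm_def)
  have d2: "distinct t2" using t2(1) dt by (auto simp: subseq_conv_nths)
  obtain segs where sg: "part Q \<sigma> segs" "length segs = greedy_count P (length \<sigma>) \<sigma>"
    using greedy_real[of P \<sigma> "length \<sigma>"] single unfolding Q_def by auto
  have "concat segs = map (rank t2) t2" using sg(1) t2(2) by (simp add: part_def std_rank)
  then obtain segs2 where s2: "concat segs2 = t2" "segs = map (map (rank t2)) segs2"
    using map_concat_split by blast
  have "part Q t2 segs2"
    unfolding part_def
  proof (rule conjI[OF s2(1)], rule ballI)
    fix c assume c: "c \<in> set segs2"
    have "map (rank t2) c \<in> set segs" using c s2(2) by simp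
    then have "map (rank t2) c \<noteq> [] \<and> Q (map (rank t2) c)" using sg(1) unfolding part_def by blast
    moreover have "set c \<subseteq> set t2" using c s2(1) by auto
    moreover have "distinct c" using c s2(1) d2 by (metis distinct_concat_iff)
    ultimately show "c \<noteq> [] \<and> Q c" using std_map_rank[OF d2] unfolding Q_def by auto
  qed
  then have "part Q (u @ v) segs2" using uv(2) by simp
  then obtain segs3 where s3: "part Q (u @ x # v) segs3" "length segs3 \<le> length segs2 + 2"
    using insert_part[of Q x u v segs2, OF hert herd single] dt uv(1) by blast
  have "greedy_count P (length \<tau>) \<tau> \<le> length segs3"
    using greedy_opt[of P \<tau> segs3 "length \<tau>"] herd dt s3(1) uv(1) unfolding Q_def by blast
  then show ?thesis using s3(2) sg(2) s2(2) unfolding P_def by simp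
qed

theorem mainTheorem5:
  fixes n :: nat and \<sigma> \<tau> :: "nat list"
  assumes "is_perm n \<sigma>" and "is_perm (Suc n) \<tau>" and "contained \<sigma> \<tau>"
  shows "al \<tau> \<le> al \<sigma> + 2 \<and> (\<forall>k::nat. k \<ge> 1 \<longrightarrow> s_k k \<tau> \<le> s_k k \<sigma> + 2)"
proof
  show "al \<tau> \<le> al \<sigma> + 2" by (rule al_bound[OF assms])
  show "\<forall>k::nat. k \<ge> 1 \<longrightarrow> s_k k \<tau> \<le> s_k k \<sigma> + 2"
  proof (intro allI impI)
    fix k :: nat assume "k \<ge> 1"
    show "s_k k \<tau> \<le> s_k k \<sigma> + 2"
    proof (cases "k \<le> 1")
      case True
      then show ?thesis by (simp add: s_k_def)
    next
      case False
      then have k: "k \<ge> 2" by simp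
      have "enat (greedy_count (\<lambda>q. H_plus k q \<or> H_minus k q) (length \<tau>) \<tau>)
          \<le> enat (greedy_count (\<lambda>q. H_plus k q \<or> H_minus k q) (length \<sigma>) \<sigma>) + 2"
        using sk_bound[OF assms k] by (simp add: numeral_eq_enat)
      then show ?thesis using False by (simp add: s_k_def)
    qed
  qed
qed

end
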